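(* Let $(C,\mathfrak p,\mathfrak d)$ be a regular $q$-cycle coalgebra and let $s\ge1$ be an integer such that $(\mathfrak p_{10}^1)^r\ne1$ for all $0<r<s$. Then $\mathfrak p_{ij}^k=\mathfrak d_{ij}^k=0$ whenever $i,j\ne0$ and $i+j\le s$ (with $0\le i,j,k\le n-1$). Moreover, the formula $$\mathfrak d_{i0}^1\bigl(\mathfrak p_{10}^1-\mathfrak p_{i0}^i\bigr)=\sum_{h=1}^{i-1}\mathfrak p_{i0}^h\mathfrak d_{h0}^1-\sum_{h=2}^{i}\mathfrak d_{i0}^h\mathfrak p_{h0}^1$$ defines recursively $\mathfrak d_{i0}^1$ for $1<i\le s$ (with $i\le n-1$).
   Context: $K$ is an algebraically closed field of characteristic $0$ and $n\ge2$. $C$ is the coalgebra dual to $K[y]/\langle y^n\rangle$: basis $x_0,\dots,x_{n-1}$, $\Delta(x_i)=\sum_{j+k=i}x_j\otimes x_k$, $\epsilon(x_i)=\delta_{i0}$; $C\otimes C$ has the tensor product coalgebra structure; Sweedler notation $\Delta(b)=b_{(1)}\otimes b_{(2)}$. For linear maps $\mathfrak p,\mathfrak d\colon C\otimes C\to C$ write $a\cdot b=\mathfrak p(a\otimes b)$, $a:b=\mathfrak d(a\otimes b)$, $\mathfrak p(x_i\otimes x_j)=\sum_{k=0}^{n-1}\mathfrak p_{ij}^kx_k$, $\mathfrak d(x_i\otimes x_j)=\sum_{k=0}^{n-1}\mathfrak d_{ij}^kx_k$. A triple $(C,\mathfrak p,\mathfrak d)$ with $\mathfrak p,\mathfrak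 d$ coalgebra morphisms is a regular $q$-magma coalgebra if there are coalgebra morphisms $a\otimes b\mapsto a^b$, $a\otimes b\mapsto a_b$ from $C\otimes C$ to $C$ with $a^{b_{(1)}}\cdot b_{(2)}=(a\cdot b_{(1)})^{b_{(2)}}=\epsilon(b)a$ and $(a:b_{(2)})_{b_{(1)}}=a_{b_{(2)}}:b_{(1)}=\epsilon(b)a$. It is a regular $q$-cycle coalgebra if moreover for all $a,b,c$: (1) $(a\cdot b_{(1)})\cdot(c:b_{(2)})=(a\cdot c_{(2)})\cdot(b\cdot c_{(1)})$; (2) $(a\cdot b_{(1)}):(c\cdot b_{(2)})=(a:c_{(2)})\cdot(b:c_{(1)})$; (3) $(a:b_{(1)}):(c:b_{(2)})=(a:c_{(2)}):(b\cdot c_{(1)})$. *)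

theory Defs
  imports "HOL-Computational_Algebra.Polynomial"
begin

definition algebraically_closed :: "'a::field itself \<Rightarrow> bool" where
  "algebraically_closed _ \<longleftrightarrow> (\<forall>p::'a poly. degree p > 0 \<longrightarrow> (\<exists>x. poly p x = 0))"

(* Elements of C are coefficient vectors v :: nat => 'a w.r.t. the basis x_0..x_{n-1}
   (coefficients at indices >= n are 0).  x_i is bvec i. *)
definition bvec :: "nat \<Rightarrow> nat \<Rightarrow> 'a::field" where
  "bvec i = (\<lambda>k. if k = i then 1 else 0)"

(* A linear map f : C (x) C -> C is given by its structure constants f i j k
   (f(x_i (x) x_j) = sum_k f i j k x_k).  bil n f u v = f(u (x) v). *)
definition bil :: "nat \<Rightarrow> (nat \<Rightarrow> nat \<Rightarrow> nat \<Rightarrow> 'a::field) \<Rightarrow> (nat \<Rightarrow> 'a) \<Rightarrow> (nat \<Rightarrow> 'a) \<Rightarrow> (nat \<Rightarrow> 'a)" where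
  "bil n f u v = (\<lambda>k. if k < n then (\<Sum>i<n. \<Sum>j<n. u i * v j * f i j k) else 0)"

(* Comultiplication of C: Delta(x_m) = sum_{a+b=m} x_a (x) x_b;
   comult n v a b is the coefficient of x_a (x) x_b in Delta(v). *)
definition comult :: "nat \<Rightarrow> (nat \<Rightarrow> 'a::field) \<Rightarrow> nat \<Rightarrow> nat \<Rightarrow> 'a" where
  "comult n v a b = (if a + b < n then v (a + b) else 0)"

definition counit :: "(nat \<Rightarrow> 'a::field) \<Rightarrow> 'a" where
  "counit v = v 0"

(* f : C (x) C -> C is a coalgebra morphism (C (x) C with the tensor product coalgebra
   structure): Delta o f = (f (x) f) o Delta_{C(x)C} and epsilon o f = epsilon (x) epsilon,
   checked on the basis x_i (x) x_j. *)
definition coalg_morph :: "nat \<Rightarrow> (nat \<Rightarrow> nat \<Rightarrow> nat \<Rightarrow> 'a::field) \<Rightarrow> bool" where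
  "coalg_morph n f \<longleftrightarrow>
     (\<forall>i<n. \<forall>j<n.
        (\<forall>a<n. \<forall>b<n. comult n (bil n f (bvec i) (bvec j)) a b =
            (\<Sum>i1\<le>i. \<Sum>j1\<le>j. bil n f (bvec i1) (bvec j1) a
                                   * bil n f (bvec (i - i1)) (bvec (j - j1)) b))
      \<and> counit (bil n f (bvec i) (bvec j)) = (if i = 0 \<and> j = 0 then 1 else 0))"

(* Regular q-magma coalgebra (C, P, D): a.b = P(a(x)b), a:b = D(a(x)b),
   a^b = L(a(x)b), a_b = R(a(x)b); identities checked on basis elements
   a = x_i, b = x_j, with Delta(x_j) = sum_{j1 <= j} x_{j1} (x) x_{j-j1}. *)
definition regular_q_magma :: "nat \<Rightarrow> (nat \<Rightarrow> nat \<Rightarrow> nat \<Rightarrow> 'a::field) \<Rightarrow> (nat \<Rightarrow> nat \<Rightarrow> nat \<Rightarrow> 'a) \<Rightarrow> bool" where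
  "regular_q_magma n P D \<longleftrightarrow> coalg_morph n P \<and> coalg_morph n D \<and>
    (\<exists>L R. coalg_morph n L \<and> coalg_morph n R \<and>
      (\<forall>i<n. \<forall>j<n. \<forall>k.
         (\<Sum>j1\<le>j. bil n P (bil n L (bvec i) (bvec j1)) (bvec (j - j1)) k)
            = (if j = 0 then bvec i k else 0)
       \<and> (\<Sum>j1\<le>j. bil n L (bil n P (bvec i) (bvec j1)) (bvec (j - j1)) k)
            = (if j = 0 then bvec i k else 0)
       \<and> (\<Sum>j1\<le>j. bil n R (bil n D (bvec i) (bvec (j - j1))) (bvec j1) k)
            = (if j = 0 then bvec i k else 0)
       \<and> (\<Sum>j1\<le>j. bil n D (bil n R (bvec i) (bvec (j - j1))) (bvec j1) k)
            = (if j = 0 then bvec i k else 0)))"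

(* Regular q-cycle coalgebra: identities (1)-(3), on a = x_i, b = x_j, c = x_l. *)
definition regular_q_cycle :: "nat \<Rightarrow> (nat \<Rightarrow> nat \<Rightarrow> nat \<Rightarrow> 'a::field) \<Rightarrow> (nat \<Rightarrow> nat \<Rightarrow> nat \<Rightarrow> 'a) \<Rightarrow> bool" where
  "regular_q_cycle n P D \<longleftrightarrow> regular_q_magma n P D \<and>
    (\<forall>i<n. \<forall>j<n. \<forall>l<n. \<forall>k.
       (\<Sum>j1\<le>j. bil n P (bil n P (bvec i) (bvec j1)) (bil n D (bvec l) (bvec (j - j1))) k)
         = (\<Sum>l1\<le>l. bil n P (bil n P (bvec i) (bvec (l - l1))) (bil n P (bvec j) (bvec l1)) k)
     \<and> (\<Sum>j1\<le>j. bil n D (bil n P (bvec i) (bvec j1)) (bil n P (bvec l) (bvec (j - j1))) k)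
         = (\<Sum>l1\<le>l. bil n P (bil n D (bvec i) (bvec (l - l1))) (bil n D (bvec j) (bvec l1)) k)
     \<and> (\<Sum>j1\<le>j. bil n D (bil n D (bvec i) (bvec j1)) (bil n D (bvec l) (bvec (j - j1))) k)
         = (\<Sum>l1\<le>l. bil n D (bil n D (bvec i) (bvec (l - l1))) (bil n P (bvec j) (bvec l1)) k))"

end

theory Submission
  imports Defs
begin

lemma sum_atMost_rev: "(\<Sum>l1\<le>(l::nat). g l1) = (\<Sum>l1\<le>l. g (l - l1))"
  by (rule sum.reindex_bij_witness[where i="\<lambda>i. l - i" and j="\<lambda>i. l - i"]) auto

lemma sum_single:
  assumes "finite S" "x \<in> S" "\<And>y. y \<in> S \<Longrightarrow> y \<noteq> x \<Longrightarrow> f y = 0"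
  shows "sum f S = f x"
proof -
  have "sum f S = f x + sum f (S - {x})" using assms(1,2) by (simp add: sum.remove)
  also have "sum f (S - {x}) = 0" using assms(3) by (intro sum.neutral) auto
  finally show ?thesis by simp
qed

lemma sum2_single:
  assumes "finite A" "finite B" "x \<in> A" "y \<in> B"
    "\<And>a b. a \<in> A \<Longrightarrow> b \<in> B \<Longrightarrow> (a, b) \<noteq> (x, y) \<Longrightarrow> f a b = 0"
  shows "(\<Sum>a\<in>A. \<Sum>b\<in>B. f a b) = f x y"
proof -
  have "(\<Sum>a\<in>A. \<Sum>b\<in>B. f a b) = (\<Sum>b\<in>B. f x b)"
    by (rule sum_single) (use assms in \<open>auto intro!: sum.neutral\<close>)
  also have "\<dots> = f x y" by (rule sum_single) (use assms in auto)
  finally show ?thesis .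
qed

lemma sum3_single:
  assumes "finite A" "finite B" "finite C" "x \<in> A" "y \<in> B" "z \<in> C"
    "\<And>a b c. a \<in> A \<Longrightarrow> b \<in> B \<Longrightarrow> c \<in> C \<Longrightarrow> (a, b, c) \<noteq> (x, y, z) \<Longrightarrow> f a b c = 0"
  shows "(\<Sum>a\<in>A. \<Sum>b\<in>B. \<Sum>c\<in>C. f a b c) = f x y z"
proof -
  have "(\<Sum>a\<in>A. \<Sum>b\<in>B. \<Sum>c\<in>C. f a b c) = (\<Sum>b\<in>B. \<Sum>c\<in>C. f x b c)"
    by (rule sum_single) (use assms in \<open>auto intro!: sum.neutral\<close>)
  also have "\<dots> = f x y z" by (rule sum2_single) (use assms in auto)
  finally show ?thesis .
qed

lemma bil_bvec:
  assumes "i < n" "j < n"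
  shows "bil n F (bvec i) (bvec j) = (\<lambda>k. if k < n then F i j k else (0::'a::field))"
proof
  fix k
  have e: "\<And>a b. bvec i a * bvec j b * F a b k = (if b = j then (if a = i then F a b k else 0) else 0)"
    by (simp add: bvec_def)
  have "(\<Sum>a<n. \<Sum>b<n. bvec i a * bvec j b * F a b k) = F i j k"
    unfolding e using assms by simp
  then show "bil n F (bvec i) (bvec j) k = (if k < n then F i j k else 0)"
    by (simp add: bil_def)
qed

lemma bil_bvec2:
  assumes "i < n" "j < n" "l < n" "j' < n" "k < n"
  shows "bil n E (bil n F (bvec i) (bvec j)) (bil n G (bvec l) (bvec j')) k
       = (\<Sum>a<n. \<Sum>b<n. F i j a * G l j' b * (E a b k :: 'a::field))"
  unfolding bil_bvec[OF assms(1,2)] bil_bvec[OF assms(3,4)] using assms by (simp add: bil_def)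

lemma bil_bvec3:
  assumes "i < n" "j < n" "l < n" "k < n"
  shows "bil n E (bil n F (bvec i) (bvec j)) (bvec l) k
       = (\<Sum>a<n. F i j a * (E a l k :: 'a::field))"
proof -
  have "bil n E (bil n F (bvec i) (bvec j)) (bvec l) k = (\<Sum>a<n. \<Sum>b<n. F i j a * bvec l b * E a b k)"
    unfolding bil_bvec[OF assms(1,2)] using assms by (simp add: bil_def)
  also have "\<dots> = (\<Sum>a<n. F i j a * E a l k)"
  proof -
    have e: "\<And>a b. F i j a * bvec l b * E a b k = (if b = l then F i j a * E a b k else 0)"
      by (simp add: bvec_def)
    show ?thesis unfolding e using assms by simp
  qed
  finally show ?thesis .
qed

lemma cm_counit:
  assumes "coalg_morph n F" "i < n" "j < n"
  shows "F i j 0 = (if i = 0 \<and> j = 0 then 1 else (0::'a::field))"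
  using assms by (auto simp: coalg_morph_def counit_def bil_bvec)

lemma cm_mult:
  assumes "coalg_morph n F" "i < n" "j < n" "a < n" "b < n" "a + b < n"
  shows "F i j (a + b) = (\<Sum>i1\<le>i. \<Sum>j1\<le>j. F i1 j1 a * (F (i - i1) (j - j1) b :: 'a::field))"
proof -
  have "comult n (bil n F (bvec i) (bvec j)) a b =
            (\<Sum>i1\<le>i. \<Sum>j1\<le>j. bil n F (bvec i1) (bvec j1) a
                                   * bil n F (bvec (i - i1)) (bvec (j - j1)) b)"
    using assms unfolding coalg_morph_def by blast
  then show ?thesis using assms
    by (auto simp: comult_def bil_bvec intro!: sum.cong)
qed

lemma cm_nil:
  assumes "coalg_morph n F" "i < n" "j < n" "a < n" "b < n" "n \<le> a + b"
  shows "(\<Sum>i1\<le>i. \<Sum>j1\<le>j. F i1 j1 a * (F (i - i1) (j - j1) b :: 'a::field)) = 0"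
proof -
  have "comult n (bil n F (bvec i) (bvec j)) a b =
            (\<Sum>i1\<le>i. \<Sum>j1\<le>j. bil n F (bvec i1) (bvec j1) a
                                   * bil n F (bvec (i - i1)) (bvec (j - j1)) b)"
    using assms unfolding coalg_morph_def by blast
  then show ?thesis using assms
    by (auto simp: comult_def bil_bvec intro!: sum.cong)
qed


lemma sum_le1: "(\<Sum>j1\<le>(1::nat). g j1) = g 0 + (g 1 :: 'a::comm_monoid_add)"
  by (simp add: atMost_Suc add.commute)

lemma cm_00:
  assumes cm: "coalg_morph n F" and k: "1 \<le> k" "k < n"
  shows "F 0 0 k = (0::'a::field)"
proof -
  have n: "1 < n" using k by auto
  have m: "\<And>a b. a < n \<Longrightarrow> b < n \<Longrightarrow> a + b < n \<Longrightarrow> F 0 0 (a+b) = F 0 0 a * F 0 0 b"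
    using cm_mult[OF cm, of 0 0] n by simp
  have z: "\<And>a b. a < n \<Longrightarrow> b < n \<Longrightarrow> n \<le> a + b \<Longrightarrow> F 0 0 a * F 0 0 b = 0"
    using cm_nil[OF cm, of 0 0] n by simp
  have p: "F 0 0 k = F 0 0 1 ^ k" if "k < n" for k
    using that
  proof (induction k)
    case 0 show ?case using cm_counit[OF cm, of 0 0] n by simp
  next
    case (Suc k) then have "F 0 0 (k+1) = F 0 0 k * F 0 0 1" using m[of k 1] n by simp
    with Suc show ?case by simp
  qed
  have "F 0 0 1 * F 0 0 (n-1) = 0" using z[of 1 "n-1"] n by simp
  then have "F 0 0 1 * F 0 0 1 ^ (n - 1) = 0" using p[of "n-1"] n by simp
  then have "F 0 0 1 ^ n = 0" using n by (metis Suc_diff_1 less_imp_le_nat power_Suc zero_less_one order_less_le_trans)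
  hence "F 0 0 1 = 0" by simp
  thus ?thesis using p[of k] k by simp
qed

lemma cm_00':
  assumes cm: "coalg_morph n F" and "b < n"
  shows "F 0 0 b = (if b = 0 then 1 else (0::'a::field))"
  using cm_00[OF cm, of b] cm_counit[OF cm, of 0 0] assms by auto

lemma cm_low:
  assumes cm: "coalg_morph n F"
  shows "k < n \<Longrightarrow> i < n \<Longrightarrow> j < n \<Longrightarrow> i + j < k \<Longrightarrow> F i j k = (0::'a::field)"
proof (induction k arbitrary: i j)
  case 0 thus ?case by simp
next
  case (Suc k)
  have "F i j (k + 1) = (\<Sum>i1\<le>i. \<Sum>j1\<le>j. F i1 j1 k * F (i - i1) (j - j1) 1)"
    using cm_mult[OF cm, of i j k 1] Suc.prems by simp
  also have "\<dots> = 0"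
  proof (intro sum.neutral ballI)
    fix i1 j1 assume i1: "i1 \<in> {..i}" and j1: "j1 \<in> {..j}"
    show "F i1 j1 k * F (i - i1) (j - j1) 1 = 0"
    proof (cases "i1 + j1 < k")
      case True then show ?thesis using Suc.IH[of i1 j1] Suc.prems i1 j1 by auto
    next
      case False then have "i - i1 = 0" "j - j1 = 0" using Suc.prems i1 j1 by auto
      then show ?thesis using cm_00[OF cm, of 1] Suc.prems by simp
    qed
  qed
  finally show ?case by simp
qed

lemma cm_diag:
  assumes cm: "coalg_morph n F"
  shows "k < n \<Longrightarrow> F k 0 k = (F 1 0 1 ^ k :: 'a::field)"
proof (induction k)
  case 0 show ?case using cm_counit[OF cm, of 0 0] 0 by simp
next
  case (Suc k)
  have "F (Suc k) 0 (k + 1) = (\<Sum>i1\<le>Suc k. \<Sum>j1\<le>0. F i1 j1 k * F (Suc k - i1) (0 - j1) 1)"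
    using cm_mult[OF cm, of "Suc k" 0 k 1] Suc.prems by simp
  also have "\<dots> = (\<Sum>i1\<le>Suc k. F i1 0 k * F (Suc k - i1) 0 1)" by simp
  also have "\<dots> = F k 0 k * F (Suc k - k) 0 1"
  proof (rule sum_single)
    fix y assume y: "y \<in> {..Suc k}" "y \<noteq> k"
    show "F y 0 k * F (Suc k - y) 0 1 = 0"
    proof (cases "y < k")
      case True then show ?thesis using cm_low[OF cm, of k y 0] Suc.prems by simp
    next
      case False then have "y = Suc k" using y by auto
      then show ?thesis using cm_00[OF cm, of 1] Suc.prems by simp
    qed
  qed auto
  finally show ?case using Suc by simp
qed

lemma cm_nil01:
  assumes cm: "coalg_morph n F" and n: "2 \<le> n" and q: "F 1 0 1 \<noteq> (0::'a::field_char_0)"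
  shows "F 0 1 1 = 0"
proof -
  define q where "q = F 1 0 1"
  define p where "p = F 0 1 1"
  define U where "U k = (\<Sum>i1\<le>k. \<Sum>j1\<le>1. F i1 j1 k * F (k - i1) (1 - j1) 1)" for k
  have U: "U k = of_nat (k + 1) * q ^ k * p" if "k < n" for k
    using that
  proof (induction k)
    case 0 show ?case
      using cm_counit[OF cm, of 0 0] cm_counit[OF cm, of 0 1] cm_00[OF cm, of 1] n
      by (simp add: U_def sum_le1 p_def)
  next
    case (Suc k)
    define g where "g i1 = F i1 0 (Suc k) * F (Suc k - i1) 1 1 + F i1 1 (Suc k) * F (Suc k - i1) 0 1" for i1
    have "U (Suc k) = (\<Sum>i1\<le>Suc k. g i1)" by (simp add: U_def g_def sum_le1)
    also have "\<dots> = (\<Sum>i1\<le>k. g i1) + g (Suc k)" by simp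
    also have "(\<Sum>i1\<le>k. g i1) = g k"
    proof (rule sum_single)
      fix y assume y: "y \<in> {..k}" "y \<noteq> k"
      then show "g y = 0" using cm_low[OF cm, of "Suc k" y 0] cm_low[OF cm, of "Suc k" y 1] Suc.prems
        by (simp add: g_def)
    qed auto
    also have "g k = F k 1 (Suc k) * q"
      using cm_low[OF cm, of "Suc k" k 0] Suc.prems n by (simp add: g_def q_def)
    also have "F k 1 (Suc k) = U k"
      using cm_mult[OF cm, of k 1 k 1] Suc.prems n by (simp add: U_def)
    also have "g (Suc k) = q ^ Suc k * p"
      using cm_diag[OF cm, of "Suc k"] cm_00[OF cm, of 1] Suc.prems n by (simp add: g_def q_def p_def)
    finally show ?case using Suc by (simp add: algebra_simps)
  qed
  have "U (n - 1) = 0"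
    using cm_nil[OF cm, of "n-1" 1 "n-1" 1] n by (simp add: U_def)
  then have "of_nat n * q ^ (n - 1) * p = 0" using U[of "n-1"] n by simp
  then show ?thesis using q n by (simp add: q_def p_def)
qed

lemma cm_vanish:
  assumes cm: "coalg_morph n F"
    and H: "\<forall>a b. a < n \<longrightarrow> b < n \<longrightarrow> 1 \<le> b \<longrightarrow> a + b < m \<longrightarrow> F a b 1 = (0::'a::field)"
  shows "k < n \<Longrightarrow> 1 \<le> k \<Longrightarrow> i < n \<Longrightarrow> j < n \<Longrightarrow> 1 \<le> j \<Longrightarrow> i + j + 1 < m + k \<Longrightarrow> F i j k = 0"
proof (induction k arbitrary: i j)
  case 0 thus ?case by simp
next
  case (Suc k)
  show ?case
  proof (cases "k = 0")
    case True thus ?thesis using H Suc.prems by auto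
  next
    case False
    have "F i j (k + 1) = (\<Sum>i1\<le>i. \<Sum>j1\<le>j. F i1 j1 k * F (i - i1) (j - j1) 1)"
      using cm_mult[OF cm, of i j k 1] Suc.prems by simp
    also have "\<dots> = 0"
    proof (intro sum.neutral ballI)
      fix i1 j1 assume i1: "i1 \<in> {..i}" and j1: "j1 \<in> {..j}"
      show "F i1 j1 k * F (i - i1) (j - j1) 1 = 0"
      proof (cases "1 \<le> j1")
        case True
        show ?thesis
        proof (cases "i1 + j1 + 1 < m + k")
          case True then show ?thesis using Suc.IH[of i1 j1] \<open>1 \<le> j1\<close> False Suc.prems i1 j1 by auto
        next
          case False then have "i - i1 = 0" "j - j1 = 0" using Suc.prems i1 j1 by auto
          then show ?thesis using cm_00[OF cm, of 1] Suc.prems by simp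
        qed
      next
        case False then have j10: "j1 = 0" by simp
        show ?thesis
        proof (cases "i - i1 + j < m")
          case True then show ?thesis using H[rule_format, of "i - i1" j] Suc.prems i1 j10 by auto
        next
          case False then have "i1 + 0 < k" using Suc.prems i1 by auto
          then show ?thesis using cm_low[OF cm, of k i1 0] j10 Suc.prems i1 by auto
        qed
      qed
    qed
    finally show ?thesis by simp
  qed
qed


lemma S1:
  assumes cmF: "coalg_morph n F" and cmG: "coalg_morph n G"
    and H: "\<forall>a b. a < n \<longrightarrow> b < n \<longrightarrow> 1 \<le> b \<longrightarrow> a + b < m \<longrightarrow> H a b 1 = (0::'a::field)"
    and i: "i < n" and l: "l < n" "1 \<le> l" and m: "i + l = m"
  shows "(\<Sum>a<n. \<Sum>b<n. F i 0 a * G l 0 b * H a b 1) = F i 0 i * G l 0 l * H i l 1"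
proof (rule sum2_single[where f="\<lambda>a b. F i 0 a * G l 0 b * H a b 1" and x=i and y=l])
  fix a b assume a: "a \<in> {..<n}" and b: "b \<in> {..<n}" and ne: "(a, b) \<noteq> (i, l)"
  show "F i 0 a * G l 0 b * H a b 1 = 0"
  proof (cases "i < a")
    case True then show ?thesis using cm_low[OF cmF, of a i 0] a i by simp
  next
    case False
    show ?thesis
    proof (cases "l < b")
      case True then show ?thesis using cm_low[OF cmG, of b l 0] b l by simp
    next
      case False2: False
      show ?thesis
      proof (cases "b = 0")
        case True then show ?thesis using cm_counit[OF cmG, of l 0] l by simp
      next
        case False3: False
        have "a + b < m" using False False2 ne m by auto
        then show ?thesis using H[rule_format, of a b] a b False3 by simp
      qed
    qed
  qed
qed (use i l in auto)

lemma S2: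
  assumes cmF: "coalg_morph n F" and cmG: "coalg_morph n G"
    and HF: "\<forall>a b. a < n \<longrightarrow> b < n \<longrightarrow> 1 \<le> b \<longrightarrow> a + b < m \<longrightarrow> F a b 1 = (0::'a::field)"
    and HG: "\<forall>a b. a < n \<longrightarrow> b < n \<longrightarrow> 1 \<le> b \<longrightarrow> a + b < m \<longrightarrow> G a b 1 = 0"
    and E01: "E 0 1 1 = 0" and m2: "2 \<le> m" and n2: "2 \<le> n"
    and i: "i < n" and j: "j < n" "1 \<le> j" and m: "i + j = m"
  shows "(\<Sum>j1\<le>j. \<Sum>a<n. \<Sum>b<n. F i j1 a * G 0 (j - j1) b * E a b 1) = F i j 1 * E 1 0 1"
proof -
  have "(\<Sum>j1\<le>j. \<Sum>a<n. \<Sum>b<n. F i j1 a * G 0 (j - j1) b * E a b 1) = F i j 1 * G 0 (j - j) 0 * E 1 0 1"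
  proof (rule sum3_single[where f="\<lambda>j1 a b. F i j1 a * G 0 (j - j1) b * E a b 1" and x=j and y=1 and z=0])
    fix j1 a b assume j1: "j1 \<in> {..j}" and a: "a \<in> {..<n}" and b: "b \<in> {..<n}"
      and ne: "(j1, a, b) \<noteq> (j, 1, 0)"
    show "F i j1 a * G 0 (j - j1) b * E a b 1 = 0"
    proof (cases "j1 < j")
      case True
      show ?thesis
      proof (cases "b = 0")
        case True then show ?thesis using cm_counit[OF cmG, of 0 "j - j1"] \<open>j1 < j\<close> j by simp
      next
        case False
        show ?thesis
        proof (cases "j - j1 + 1 < m + b")
          case True then show ?thesis
            using cm_vanish[OF cmG HG, of b 0 "j - j1"] False b j \<open>j1 < j\<close> by simp
        next
          case False2: False
          then have "b = 1" "i = 0" "j1 = 0" using False \<open>j1 < j\<close> m by auto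
          then show ?thesis using E01 cm_00'[OF cmF, of a] a by auto
        qed
      qed
    next
      case False
      then have "j1 = j" using j1 by auto
      show ?thesis
      proof (cases "b = 0")
        case False then show ?thesis using cm_00[OF cmG, of b] b \<open>j1 = j\<close> by simp
      next
        case True
        then have "a \<noteq> 1" using ne \<open>j1 = j\<close> by auto
        show ?thesis
        proof (cases "a = 0")
          case True then show ?thesis using cm_counit[OF cmF, of i j] i j \<open>j1 = j\<close> by simp
        next
          case False
          then show ?thesis using cm_vanish[OF cmF HF, of a i j] \<open>a \<noteq> 1\<close> a i j m \<open>j1 = j\<close> by simp
        qed
      qed
    qed
  qed (use n2 in auto)
  then show ?thesis using cm_counit[OF cmG, of 0 0] n2 by simp
qed

lemma inv_nonzero:
  assumes cmF: "coalg_morph n F" and cmG: "coalg_morph n G" and n2: "2 \<le> n"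
    and s: "(\<Sum>a<n. F 1 0 a * G a 0 1) = (1::'a::field)"
  shows "F 1 0 1 \<noteq> 0 \<and> G 1 0 1 \<noteq> 0"
proof -
  have "(\<Sum>a<n. F 1 0 a * G a 0 1) = F 1 0 1 * G 1 0 1"
  proof (rule sum_single)
    fix y assume y: "y \<in> {..<n}" "y \<noteq> 1"
    show "F 1 0 y * G y 0 1 = 0"
    proof (cases "y = 0")
      case True then show ?thesis using cm_counit[OF cmF, of 1 0] n2 by simp
    next
      case False then show ?thesis using cm_low[OF cmF, of y 1 0] y n2 by simp
    qed
  qed (use n2 in auto)
  then show ?thesis using s by auto
qed


lemma sum_00:
  assumes cm: "coalg_morph n F" and n: "0 < n"
  shows "(\<Sum>b<n. x * F 0 0 b * y b) = x * y 0 * (1::'a::field)"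
proof -
  have "(\<Sum>b<n. x * F 0 0 b * y b) = x * F 0 0 0 * y 0"
    by (rule sum_single) (use cm_00'[OF cm] n in auto)
  then show ?thesis using cm_00'[OF cm, of 0] n by simp
qed

lemma sum_restrict:
  assumes cm: "coalg_morph n F" and i: "1 \<le> i" "i < n"
  shows "(\<Sum>a<n. F i 0 a * g a) = (\<Sum>a=1..i. F i 0 a * (g a :: 'a::field))"
proof (rule sum.mono_neutral_right)
  show "\<forall>a\<in>{..<n} - {1..i}. F i 0 a * g a = 0"
  proof
    fix a assume a: "a \<in> {..<n} - {1..i}"
    show "F i 0 a * g a = 0"
    proof (cases "a = 0")
      case True then show ?thesis using cm_counit[OF cm, of i 0] i by simp
    next
      case False then show ?thesis using cm_low[OF cm, of a i 0] a i by auto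
    qed
  qed
qed (use i in auto)

theorem theorem6p1:
  fixes P D :: "nat \<Rightarrow> nat \<Rightarrow> nat \<Rightarrow> 'a::field_char_0" and n s :: nat
  assumes "algebraically_closed TYPE('a)"
    and "n \<ge> 2"
    and "regular_q_cycle n P D"
    and "s \<ge> 1"
    and "\<forall>r. 0 < r \<and> r < s \<longrightarrow> (P 1 0 1) ^ r \<noteq> 1"
  shows "(\<forall>i j k. 0 < i \<and> 0 < j \<and> i < n \<and> j < n \<and> k < n \<and> i + j \<le> s
              \<longrightarrow> P i j k = 0 \<and> D i j k = 0)
       \<and> (\<forall>i. 1 < i \<and> i \<le> s \<and> i < n \<longrightarrow>
              P 1 0 1 - P i 0 i \<noteq> 0
            \<and> D i 0 1 * (P 1 0 1 - P i 0 i)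
                = (\<Sum>h=1..i-1. P i 0 h * D h 0 1) - (\<Sum>h=2..i. D i 0 h * P h 0 1))"
proof -
  note n2 = assms(2)
  have mag: "regular_q_magma n P D" using assms(3) by (simp add: regular_q_cycle_def)
  have cyc: "\<forall>i<n. \<forall>j<n. \<forall>l<n. \<forall>k.
       (\<Sum>j1\<le>j. bil n P (bil n P (bvec i) (bvec j1)) (bil n D (bvec l) (bvec (j - j1))) k)
         = (\<Sum>l1\<le>l. bil n P (bil n P (bvec i) (bvec (l - l1))) (bil n P (bvec j) (bvec l1)) k)
     \<and> (\<Sum>j1\<le>j. bil n D (bil n P (bvec i) (bvec j1)) (bil n P (bvec l) (bvec (j - j1))) k)
         = (\<Sum>l1\<le>l. bil n P (bil n D (bvec i) (bvec (l - l1))) (bil n D (bvec j) (bvec l1)) k)"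
    using assms(3) by (simp add: regular_q_cycle_def)
  have cmP: "coalg_morph n P" and cmD: "coalg_morph n D" using mag by (auto simp: regular_q_magma_def)
  obtain L R where cmL: "coalg_morph n L" and cmR: "coalg_morph n R" and LR:
      "\<forall>i<n. \<forall>j<n. \<forall>k.
         (\<Sum>j1\<le>j. bil n P (bil n L (bvec i) (bvec j1)) (bvec (j - j1)) k)
            = (if j = 0 then bvec i k else 0)
       \<and> (\<Sum>j1\<le>j. bil n L (bil n P (bvec i) (bvec j1)) (bvec (j - j1)) k)
            = (if j = 0 then bvec i k else 0)
       \<and> (\<Sum>j1\<le>j. bil n R (bil n D (bvec i) (bvec (j - j1))) (bvec j1) k)
            = (if j = 0 then bvec i k else 0)
       \<and> (\<Sum>j1\<le>j. bil n D (bil n R (bvec i) (bvec (j - j1))) (bvec j1) k)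
            = (if j = 0 then bvec i k else 0)"
    using mag unfolding regular_q_magma_def by blast
  define q where "q = P 1 0 1"
  have "bil n P (bil n L (bvec 1) (bvec 0)) (bvec 0) 1 = 1"
    using LR[rule_format, of 1 0 1] n2 by (simp add: bvec_def)
  then have "(\<Sum>a<n. L 1 0 a * P a 0 1) = 1" using bil_bvec3[of 1 n 0 0 1 P L] n2 by simp
  then have q0: "q \<noteq> 0" using inv_nonzero[OF cmL cmP n2] by (simp add: q_def)
  have "bil n R (bil n D (bvec 1) (bvec 0)) (bvec 0) 1 = 1"
    using LR[rule_format, of 1 0 1] n2 by (simp add: bvec_def)
  then have "(\<Sum>a<n. D 1 0 a * R a 0 1) = 1" using bil_bvec3[of 1 n 0 0 1 R D] n2 by simp
  then have d0: "D 1 0 1 \<noteq> 0" using inv_nonzero[OF cmD cmR n2] by simp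
  have p01: "P 0 1 1 = 0" using cm_nil01[OF cmP n2] q0 by (simp add: q_def)
  have d01: "D 0 1 1 = 0" using cm_nil01[OF cmD n2] d0 by simp
  define Hm where "Hm m \<longleftrightarrow> (\<forall>a b. a < n \<longrightarrow> b < n \<longrightarrow> 1 \<le> b \<longrightarrow> a + b < m \<longrightarrow> P a b 1 = 0 \<and> D a b 1 = 0)" for m
  have HP: "\<forall>a b. a < n \<longrightarrow> b < n \<longrightarrow> 1 \<le> b \<longrightarrow> a + b < m \<longrightarrow> P a b 1 = 0" if "Hm m" for m
    using that by (simp add: Hm_def)
  have HD: "\<forall>a b. a < n \<longrightarrow> b < n \<longrightarrow> 1 \<le> b \<longrightarrow> a + b < m \<longrightarrow> D a b 1 = 0" if "Hm m" for m
    using that by (simp add: Hm_def)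
  have step: "P i j 1 = 0 \<and> D i j 1 = 0"
    if H: "Hm m" and m: "2 \<le> m" "m \<le> s" and ij: "i < n" "j < n" "1 \<le> j" "i + j = m" for m i j
  proof -
    have "q ^ (m - 1) \<noteq> 1" using assms(5) m by (simp add: q_def)
    then have qm: "q ^ m - q \<noteq> 0"
    proof -
      have "q ^ m = q * q ^ (m - 1)" using m by (metis Suc_diff_1 less_le_trans pos2 power_Suc)
      then show ?thesis using q0 \<open>q ^ (m - 1) \<noteq> 1\<close> by auto
    qed
    have qij: "P i 0 i * P j 0 j = q ^ m"
      using cm_diag[OF cmP, of i] cm_diag[OF cmP, of j] ij by (simp add: q_def flip: power_add)
    have e1: "(\<Sum>j1\<le>j. bil n P (bil n P (bvec i) (bvec j1)) (bil n D (bvec 0) (bvec (j - j1))) 1)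
         = (\<Sum>l1\<le>0. bil n P (bil n P (bvec i) (bvec (0 - l1))) (bil n P (bvec j) (bvec l1)) 1)"
      using cyc[rule_format, of i j 0 1] ij n2 by simp
    have "(\<Sum>j1\<le>j. bil n P (bil n P (bvec i) (bvec j1)) (bil n D (bvec 0) (bvec (j - j1))) 1)
        = (\<Sum>j1\<le>j. \<Sum>a<n. \<Sum>b<n. P i j1 a * D 0 (j - j1) b * P a b 1)"
      by (rule sum.cong[OF refl], rule bil_bvec2) (use ij n2 in auto)
    also have "\<dots> = P i j 1 * q"
      using S2[where E=P, OF cmP cmD HP[OF H] HD[OF H] p01 m(1) n2 ij] by (simp add: q_def)
    finally have l1: "(\<Sum>j1\<le>j. bil n P (bil n P (bvec i) (bvec j1)) (bil n D (bvec 0) (bvec (j - j1))) 1) = P i j 1 * q" .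
    have "(\<Sum>l1\<le>0. bil n P (bil n P (bvec i) (bvec (0 - l1))) (bil n P (bvec j) (bvec l1)) 1)
        = (\<Sum>a<n. \<Sum>b<n. P i 0 a * P j 0 b * P a b 1)"
      using bil_bvec2[of i n 0 j 0 1 P P P] ij n2 by simp
    also have "\<dots> = P i 0 i * P j 0 j * P i j 1"
      by (rule S1[where H=P, OF cmP cmP HP[OF H]]) (use ij in auto)
    finally have r1: "(\<Sum>l1\<le>0. bil n P (bil n P (bvec i) (bvec (0 - l1))) (bil n P (bvec j) (bvec l1)) 1) = P i 0 i * P j 0 j * P i j 1" .
    have "P i j 1 * q = q ^ m * P i j 1" using e1 l1 r1 qij by metis
    then have "P i j 1 * (q ^ m - q) = 0" by (auto simp: algebra_simps)
    then have c1: "P i j 1 = 0" using qm by simp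
    have e2: "(\<Sum>j1\<le>0. bil n D (bil n P (bvec i) (bvec j1)) (bil n P (bvec j) (bvec (0 - j1))) 1)
         = (\<Sum>l1\<le>j. bil n P (bil n D (bvec i) (bvec (j - l1))) (bil n D (bvec 0) (bvec l1)) 1)"
      using cyc[rule_format, of i 0 j 1] ij n2 by simp
    have "(\<Sum>j1\<le>0. bil n D (bil n P (bvec i) (bvec j1)) (bil n P (bvec j) (bvec (0 - j1))) 1)
        = (\<Sum>a<n. \<Sum>b<n. P i 0 a * P j 0 b * D a b 1)"
      using bil_bvec2[of i n 0 j 0 1 D P P] ij n2 by simp
    also have "\<dots> = P i 0 i * P j 0 j * D i j 1"
      by (rule S1[where H=D, OF cmP cmP HD[OF H]]) (use ij in auto)
    finally have l2: "(\<Sum>j1\<le>0. bil n D (bil n P (bvec i) (bvec j1)) (bil n P (bvec j) (bvec (0 - j1))) 1) = q ^ m * D i j 1"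
      using qij by metis
    have "(\<Sum>l1\<le>j. bil n P (bil n D (bvec i) (bvec (j - l1))) (bil n D (bvec 0) (bvec l1)) 1)
        = (\<Sum>l1\<le>j. \<Sum>a<n. \<Sum>b<n. D i (j - l1) a * D 0 l1 b * P a b 1)"
      by (rule sum.cong[OF refl], rule bil_bvec2) (use ij n2 in auto)
    also have "\<dots> = (\<Sum>l1\<le>j. \<Sum>a<n. \<Sum>b<n. D i (j - (j - l1)) a * D 0 (j - l1) b * P a b 1)"
      by (rule sum_atMost_rev)
    also have "\<dots> = (\<Sum>l1\<le>j. \<Sum>a<n. \<Sum>b<n. D i l1 a * D 0 (j - l1) b * P a b 1)"
      by (rule sum.cong) auto
    also have "\<dots> = D i j 1 * q"
      using S2[where E=P, OF cmD cmD HD[OF H] HD[OF H] p01 m(1) n2 ij] by (simp add: q_def)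
    finally have r2: "(\<Sum>l1\<le>j. bil n P (bil n D (bvec i) (bvec (j - l1))) (bil n D (bvec 0) (bvec l1)) 1) = D i j 1 * q" .
    have "q ^ m * D i j 1 = D i j 1 * q" using e2 l2 r2 by metis
    then have "D i j 1 * (q ^ m - q) = 0" by (auto simp: algebra_simps)
    then have c2: "D i j 1 = 0" using qm by simp
    show ?thesis using c1 c2 by simp
  qed
  have Hind: "Hm (t + 2)" if "t \<le> s - 1" for t
    using that
  proof (induction t)
    case 0
    show ?case unfolding Hm_def
    proof (intro allI impI)
      fix a b assume "a < n" "b < n" "1 \<le> b" "a + b < 0 + 2"
      then have "a = 0" "b = 1" by auto
      then show "P a b 1 = 0 \<and> D a b 1 = 0" using p01 d01 by simp
    qed
  next
    case (Suc t)
    have H: "Hm (t + 2)" using Suc by simp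
    show ?case unfolding Hm_def
    proof (intro allI impI)
      fix a b assume ab: "a < n" "b < n" "1 \<le> b" "a + b < Suc t + 2"
      show "P a b 1 = 0 \<and> D a b 1 = 0"
      proof (cases "a + b < t + 2")
        case True then show ?thesis using H ab by (simp add: Hm_def)
      next
        case False
        then have "a + b = t + 2" using ab by simp
        then show ?thesis using step[OF H, of a b] Suc.prems ab by simp
      qed
    qed
  qed
  have Hs: "Hm (s + 1)" using Hind[of "s - 1"] assms(4) by simp
  have part1: "\<forall>i j k. 0 < i \<and> 0 < j \<and> i < n \<and> j < n \<and> k < n \<and> i + j \<le> s
              \<longrightarrow> P i j k = 0 \<and> D i j k = 0"
  proof (intro allI impI)
    fix i j k assume a: "0 < i \<and> 0 < j \<and> i < n \<and> j < n \<and> k < n \<and> i + j \<le> s"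
    show "P i j k = 0 \<and> D i j k = 0"
    proof (cases "k = 0")
      case True then show ?thesis using cm_counit[OF cmP, of i j] cm_counit[OF cmD, of i j] a by simp
    next
      case False then show ?thesis
        using cm_vanish[OF cmP HP[OF Hs], of k i j] cm_vanish[OF cmD HD[OF Hs], of k i j] a by simp
    qed
  qed
  have part2: "P 1 0 1 - P i 0 i \<noteq> 0
            \<and> D i 0 1 * (P 1 0 1 - P i 0 i)
                = (\<Sum>h=1..i-1. P i 0 h * D h 0 1) - (\<Sum>h=2..i. D i 0 h * P h 0 1)"
    if i: "1 < i" "i \<le> s" "i < n" for i
  proof -
    have Pii: "P i 0 i = q ^ i" using cm_diag[OF cmP, of i] i by (simp add: q_def)
    have "q ^ (i - 1) \<noteq> 1" using assms(5) i by (simp add: q_def)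
    have qi: "q - q ^ i \<noteq> 0"
    proof -
      have "q ^ i = q * q ^ (i - 1)" using i by (metis Suc_diff_1 less_trans zero_less_one power_Suc)
      then show ?thesis using q0 \<open>q ^ (i - 1) \<noteq> 1\<close> by auto
    qed
    have e: "(\<Sum>j1\<le>0. bil n D (bil n P (bvec i) (bvec j1)) (bil n P (bvec 0) (bvec (0 - j1))) 1)
         = (\<Sum>l1\<le>0. bil n P (bil n D (bvec i) (bvec (0 - l1))) (bil n D (bvec 0) (bvec l1)) 1)"
      using cyc[rule_format, of i 0 0 1] i n2 by simp
    have "(\<Sum>j1\<le>0. bil n D (bil n P (bvec i) (bvec j1)) (bil n P (bvec 0) (bvec (0 - j1))) 1)
        = (\<Sum>a<n. \<Sum>b<n. P i 0 a * P 0 0 b * D a b 1)"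
      using bil_bvec2[of i n 0 0 0 1 D P P] i n2 by simp
    also have "\<dots> = (\<Sum>a<n. P i 0 a * D a 0 1)"
      using sum_00[OF cmP, of "P i 0 _" "\<lambda>b. D _ b 1"] n2 by simp
    also have "\<dots> = (\<Sum>h=1..i. P i 0 h * D h 0 1)"
      by (rule sum_restrict[OF cmP]) (use i in auto)
    finally have L: "(\<Sum>j1\<le>0. bil n D (bil n P (bvec i) (bvec j1)) (bil n P (bvec 0) (bvec (0 - j1))) 1)
        = (\<Sum>h=1..i. P i 0 h * D h 0 1)" .
    have "(\<Sum>l1\<le>0. bil n P (bil n D (bvec i) (bvec (0 - l1))) (bil n D (bvec 0) (bvec l1)) 1)
        = (\<Sum>a<n. \<Sum>b<n. D i 0 a * D 0 0 b * P a b 1)"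
      using bil_bvec2[of i n 0 0 0 1 P D D] i n2 by simp
    also have "\<dots> = (\<Sum>a<n. D i 0 a * P a 0 1)"
      using sum_00[OF cmD, of "D i 0 _" "\<lambda>b. P _ b 1"] n2 by simp
    also have "\<dots> = (\<Sum>h=1..i. D i 0 h * P h 0 1)"
      by (rule sum_restrict[OF cmD]) (use i in auto)
    finally have R: "(\<Sum>l1\<le>0. bil n P (bil n D (bvec i) (bvec (0 - l1))) (bil n D (bvec 0) (bvec l1)) 1)
        = (\<Sum>h=1..i. D i 0 h * P h 0 1)" .
    obtain i' where i': "i = Suc i'" using i by (cases i) auto
    have A: "(\<Sum>h=1..i. P i 0 h * D h 0 1) = (\<Sum>h=1..i-1. P i 0 h * D h 0 1) + P i 0 i * D i 0 1"
      using i' by (simp add: sum.cl_ivl_Suc)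
    have B: "(\<Sum>h=1..i. D i 0 h * P h 0 1) = D i 0 1 * P 1 0 1 + (\<Sum>h=2..i. D i 0 h * P h 0 1)"
      using i by (subst sum.atLeast_Suc_atMost) (simp_all add: numeral_2_eq_2)
    have eq: "(\<Sum>h=1..i-1. P i 0 h * D h 0 1) + P i 0 i * D i 0 1 = D i 0 1 * P 1 0 1 + (\<Sum>h=2..i. D i 0 h * P h 0 1)"
      using e L R A B by simp
    then have eq': "(\<Sum>h=1..i-1. P i 0 h * D h 0 1) = D i 0 1 * P 1 0 1 + (\<Sum>h=2..i. D i 0 h * P h 0 1) - P i 0 i * D i 0 1"
      by (simp add: eq_diff_eq)
    show ?thesis unfolding eq' using qi Pii by (simp add: q_def algebra_simps)
  qed
  show ?thesis using part1 part2 by blast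
qed

end
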